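(* Let $\mathcal C\subset\mathbb C$ be a Jordan curve with interior domain $D$, $\xi(u)$ a meromorphic function with no singularities on $\mathcal C$, and $f(u,v)$ a meromorphic function with no singularities in $\overline D\times\overline D$. Then $\oint_{\mathcal C}\oint_{\mathcal C}f(u,v)\frac{\xi(u)-\xi(v)}{u-v}\,du\,dv=-\oint_{\mathcal C}f(u,u)\xi(u)\,du$.
   Context: A Jordan curve is a disjoint union of simple closed (positively oriented) curves in $\mathbb C$ whose inner domains are pairwise disjoint; its interior domain is the union of these inner domains. For a continuous function $F$ on $\mathcal C$, $\oint_{\mathcal C}F(u)\,du:=\frac1{2\pi i}\int_{\mathcal C}F(u)\,du$. *)

theory Defs
  imports "HOL-Complex_Analysis.Complex_Analysis"
begin

definition jordan_curve :: "'i set \<Rightarrow> ('i \<Rightarrow> real \<Rightarrow> complex) \<Rightarrow> bool" where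
  "jordan_curve I \<gamma> \<longleftrightarrow> finite I \<and>
     (\<forall>i\<in>I. valid_path (\<gamma> i) \<and> simple_path (\<gamma> i) \<and> pathfinish (\<gamma> i) = pathstart (\<gamma> i) \<and>
        (\<forall>z\<in>inside (path_image (\<gamma> i)). winding_number (\<gamma> i) z = 1)) \<and>
     (\<forall>i\<in>I. \<forall>j\<in>I. i \<noteq> j \<longrightarrow>
        path_image (\<gamma> i) \<inter> path_image (\<gamma> j) = {} \<and>
        inside (path_image (\<gamma> i)) \<inter> inside (path_image (\<gamma> j)) = {})"

definition jcurve_image :: "'i set \<Rightarrow> ('i \<Rightarrow> real \<Rightarrow> complex) \<Rightarrow> complex set" where
  "jcurve_image I \<gamma> = (\<Union>i\<in>I. path_image (\<gamma> i))"

definition jdomain :: "'i set \<Rightarrow> ('i \<Rightarrow> real \<Rightarrow> complex) \<Rightarrow> complex set" where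
  "jdomain I \<gamma> = (\<Union>i\<in>I. inside (path_image (\<gamma> i)))"

definition jint :: "'i set \<Rightarrow> ('i \<Rightarrow> real \<Rightarrow> complex) \<Rightarrow> (complex \<Rightarrow> complex) \<Rightarrow> complex" where
  "jint I \<gamma> F = (1 / (2 * of_real pi * \<i>)) * (\<Sum>i\<in>I. contour_integral (\<gamma> i) F)"

text \<open>Difference quotient (xi(u) - xi(v))/(u - v), extended continuously to the diagonal.\<close>
definition dquot :: "(complex \<Rightarrow> complex) \<Rightarrow> complex \<Rightarrow> complex \<Rightarrow> complex" where
  "dquot \<xi> u v = (if u = v then deriv \<xi> u else (\<xi> u - \<xi> v) / (u - v))"

end

theory Submission
  imports Defs
begin


lemma param_cont:
  assumes c: "path c" and dc: "continuous_on {0..1} (\<lambda>t. vector_derivative c (at t))"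
    and G: "continuous_on (A \<times> path_image c) (\<lambda>(a,u). G a u)"
  shows "continuous_on A (\<lambda>a. contour_integral c (G a))"
proof -
  have cc: "continuous_on {0..1} c" using c by (simp add: path_def)
  have 1: "continuous_on (A \<times> {0..1}) (\<lambda>x. (fst x, c (snd x)))"
    by (intro continuous_intros continuous_on_compose2[OF cc]) auto
  have 2: "(\<lambda>x. (fst x, c (snd x))) ` (A \<times> {0..1}) \<subseteq> A \<times> path_image c"
    by (auto simp: path_image_def)
  have 3: "continuous_on (A \<times> {0..1}) (\<lambda>x. G (fst x) (c (snd x)))"
    using continuous_on_compose2[OF G 1 2] by (simp add: split_beta)
  have 4: "continuous_on (A \<times> {0..1}) (\<lambda>x. vector_derivative c (at (snd x)))"
    by (intro continuous_on_compose2[OF dc] continuous_intros) auto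
  have "continuous_on (A \<times> cbox 0 1) (\<lambda>(a,t). G a (c t) * vector_derivative c (at t))"
    using continuous_on_mult[OF 3 4] by (simp add: split_beta)
  then have "continuous_on A (\<lambda>a. integral (cbox 0 1) (\<lambda>t. G a (c t) * vector_derivative c (at t)))"
    by (rule integral_continuous_on_param)
  then show ?thesis by (simp add: contour_integral_integral)
qed

lemma param_integrable:
  assumes c: "path c" and dc: "continuous_on {0..1} (\<lambda>t. vector_derivative c (at t))"
    and h: "continuous_on (path_image c) h"
  shows "h contour_integrable_on c"
proof -
  have cc: "continuous_on {0..1} c" using c by (simp add: path_def)
  have "continuous_on {0..1} (\<lambda>t. h (c t))"
    by (rule continuous_on_compose2[OF h cc]) (auto simp: path_image_def)
  then have "continuous_on {0..1} (\<lambda>t. h (c t) * vector_derivative c (at t))"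
    using dc by (intro continuous_intros)
  then show ?thesis unfolding contour_integrable_on
    by (intro integrable_continuous_real)
qed

lemma param_holo:
  assumes c: "valid_path c" and dc: "continuous_on {0..1} (\<lambda>t. vector_derivative c (at t))"
    and V: "open V"
    and F: "continuous_on (path_image c \<times> V) (\<lambda>(u,v). F u v)"
    and hol: "\<And>u. u \<in> path_image c \<Longrightarrow> (\<lambda>v. F u v) holomorphic_on V"
  shows "(\<lambda>v. contour_integral c (\<lambda>u. F u v)) holomorphic_on V"
proof -
  have pc: "path c" using c valid_path_imp_path by blast
  have Fs: "continuous_on (V \<times> path_image c) (\<lambda>(v,u). F u v)"
    using continuous_on_swap_args[OF F] by (simp add: split_beta)
  have cont: "continuous_on V (\<lambda>v. contour_integral c (\<lambda>u. F u v))"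
    by (rule param_cont[OF pc dc Fs])
  have seg: "contour_integral (linepath x y) (\<lambda>v. contour_integral c (\<lambda>u. F u v))
        = contour_integral c (\<lambda>u. contour_integral (linepath x y) (F u))"
    and segi: "(\<lambda>u. contour_integral (linepath x y) (F u)) contour_integrable_on c"
    if xy: "closed_segment x y \<subseteq> V" for x y
  proof -
    have F1: "continuous_on (path_image (linepath x y) \<times> path_image c) (\<lambda>(w, z). F z w)"
      by (rule continuous_on_subset[OF Fs]) (use xy in \<open>simp add: Sigma_mono\<close>)
    show "contour_integral (linepath x y) (\<lambda>v. contour_integral c (\<lambda>u. F u v))
        = contour_integral c (\<lambda>u. contour_integral (linepath x y) (F u))"
    proof -
      have d1: "continuous_on {0..1} (\<lambda>t. vector_derivative (linepath x y) (at t))"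
        by (simp add: continuous_on_const)
      show ?thesis
        using contour_integral_swap[of "linepath x y" c "\<lambda>w z. F z w", OF F1 valid_path_linepath c d1 dc] by simp
    qed
    have F2: "continuous_on (path_image c \<times> path_image (linepath x y)) (\<lambda>(u, w). F u w)"
      by (rule continuous_on_subset[OF F]) (use xy in \<open>simp add: Sigma_mono\<close>)
    have "continuous_on (path_image c) (\<lambda>u. contour_integral (linepath x y) (F u))"
      by (rule param_cont[OF path_linepath _ F2]) (simp add: continuous_on_const)
    then show "(\<lambda>u. contour_integral (linepath x y) (F u)) contour_integrable_on c"
      by (rule param_integrable[OF pc dc])
  qed
  have "(\<lambda>v. contour_integral c (\<lambda>u. F u v)) analytic_on V"
  proof (rule Morera_triangle[OF cont V], intro impI)
    fix a b d assume hull: "convex hull {a, b, d} \<subseteq> V"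
    have s1: "closed_segment a b \<subseteq> V" "closed_segment b d \<subseteq> V" "closed_segment d a \<subseteq> V"
      using order_trans[OF segments_subset_convex_hull(1) hull] order_trans[OF segments_subset_convex_hull(3) hull]
        order_trans[OF segments_subset_convex_hull(5) hull] by auto
    have z: "contour_integral (linepath a b) (F u) + contour_integral (linepath b d) (F u)
           + contour_integral (linepath d a) (F u) = 0" if "u \<in> path_image c" for u
      using has_chain_integral_chain_integral3[OF Cauchy_theorem_triangle[OF holomorphic_on_subset[OF hol[OF that] hull]]] .
    have "contour_integral (linepath a b) (\<lambda>v. contour_integral c (\<lambda>u. F u v)) +
          contour_integral (linepath b d) (\<lambda>v. contour_integral c (\<lambda>u. F u v)) +
          contour_integral (linepath d a) (\<lambda>v. contour_integral c (\<lambda>u. F u v))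
        = contour_integral c (\<lambda>u. contour_integral (linepath a b) (F u) + contour_integral (linepath b d) (F u)
           + contour_integral (linepath d a) (F u))"
      using s1 seg[OF s1(1)] seg[OF s1(2)] seg[OF s1(3)] segi[OF s1(1)] segi[OF s1(2)] segi[OF s1(3)]
      by (simp add: contour_integral_add contour_integrable_add)
    also have "\<dots> = 0"
      by (simp add: z contour_integral_eq_0)
    finally show "contour_integral (linepath a b) (\<lambda>v. contour_integral c (\<lambda>u. F u v)) +
          contour_integral (linepath b d) (\<lambda>v. contour_integral c (\<lambda>u. F u v)) +
          contour_integral (linepath d a) (\<lambda>v. contour_integral c (\<lambda>u. F u v)) = 0" .
  qed
  then show ?thesis by (rule analytic_imp_holomorphic)
qed

lemma vd_circlepath_cont: "continuous_on {0..1} (\<lambda>t. vector_derivative (circlepath z r) (at t))"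
  unfolding vector_derivative_circlepath by (intro continuous_intros)

lemma diag_holo:
  assumes U: "open U" and fc: "continuous_on (U \<times> U) (\<lambda>(u, v). f u v)"
    and f1: "\<forall>v\<in>U. (\<lambda>u. f u v) holomorphic_on U"
    and f2: "\<forall>u\<in>U. f u holomorphic_on U"
  shows "(\<lambda>u. f u u) holomorphic_on U"
  unfolding holomorphic_on_open[OF U]
proof
  fix z0 assume z0: "z0 \<in> U"
  obtain \<rho> where \<rho>: "\<rho> > 0" "cball z0 \<rho> \<subseteq> U" using open_contains_cball U z0 by blast
  define \<Psi> where "\<Psi> u = contour_integral (circlepath z0 \<rho>) (\<lambda>w. f w u / (w - u))" for u
  have sph: "sphere z0 \<rho> \<subseteq> U" "ball z0 \<rho> \<subseteq> U" using \<rho> by auto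
  have pim: "path_image (circlepath z0 \<rho>) = sphere z0 \<rho>"
    using \<rho> by (simp add: path_image_circlepath_nonneg)
  have Fc: "continuous_on (path_image (circlepath z0 \<rho>) \<times> ball z0 \<rho>) (\<lambda>(w, u). f w u / (w - u))"
  proof -
    have a: "continuous_on (sphere z0 \<rho> \<times> ball z0 \<rho>) (\<lambda>x. f (fst x) (snd x))"
      using continuous_on_subset[OF fc] sph by (simp add: split_beta Sigma_mono)
    have "continuous_on (sphere z0 \<rho> \<times> ball z0 \<rho>) (\<lambda>x. f (fst x) (snd x) / (fst x - snd x))"
      by (intro continuous_intros a) auto
    then show ?thesis using \<rho> by (simp add: split_beta)
  qed
  have Fh: "(\<lambda>u. f w u / (w - u)) holomorphic_on ball z0 \<rho>" if "w \<in> path_image (circlepath z0 \<rho>)" for w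
  proof -
    have "w \<in> U" "w \<notin> ball z0 \<rho>" using that pim sph by auto
    then show ?thesis
      by (intro holomorphic_intros holomorphic_on_subset[OF bspec[OF f2]] sph(2)) auto
  qed
  have hol: "\<Psi> holomorphic_on ball z0 \<rho>"
    unfolding \<Psi>_def
    by (rule param_holo[OF valid_path_circlepath vd_circlepath_cont open_ball Fc Fh])
  have eq: "f u u = \<Psi> u / (2 * of_real pi * \<i>)" if "u \<in> ball z0 \<rho>" for u
  proof -
    have "((\<lambda>w. f w u / (w - u)) has_contour_integral (2 * of_real pi * \<i> * f u u)) (circlepath z0 \<rho>)"
    proof (rule Cauchy_integral_circlepath)
      have "(\<lambda>w. f w u) holomorphic_on U" using f1 that sph by auto
      then show "continuous_on (cball z0 \<rho>) (\<lambda>w. f w u)" "(\<lambda>w. f w u) holomorphic_on ball z0 \<rho>"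
        using \<rho> sph by (auto intro: holomorphic_on_imp_continuous_on holomorphic_on_subset)
      show "cmod (u - z0) < \<rho>" using that by (simp add: dist_norm norm_minus_commute)
    qed
    then show ?thesis unfolding \<Psi>_def using contour_integral_unique by fastforce
  qed
  have "(\<lambda>u. \<Psi> u / (2 * of_real pi * \<i>)) holomorphic_on ball z0 \<rho>"
    by (intro holomorphic_intros hol) simp
  then have "(\<lambda>u. f u u) holomorphic_on ball z0 \<rho>"
    by (rule holomorphic_transform) (simp add: eq)
  then have "(\<lambda>u. f u u) field_differentiable at z0"
    using \<rho> by (intro holomorphic_on_imp_differentiable_at[of _ "ball z0 \<rho>"]) auto
  then show "\<exists>f'. ((\<lambda>u. f u u) has_field_derivative f') (at z0)"
    by (simp add: field_differentiable_def)
qed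

lemma approx_poly:
  assumes S: "open S" and g: "valid_path g" and pg: "path_image g \<subseteq> S"
  obtains q where "valid_path q" "continuous_on {0..1} (\<lambda>t. vector_derivative q (at t))"
    "path_image q \<subseteq> S" "\<And>f. f holomorphic_on S \<Longrightarrow> contour_integral g f = contour_integral q f"
proof -
  have "path g" using g by (simp add: valid_path_imp_path)
  obtain d where d: "0 < d" and
    dd: "\<And>g' h. valid_path g' \<Longrightarrow> valid_path h \<Longrightarrow> (\<forall>t \<in> {0..1}. norm(g' t - g t) < d \<and> norm(h t - g t) < d)
          \<Longrightarrow> pathstart h = pathstart g' \<and> pathfinish h = pathfinish g'
          \<Longrightarrow> path_image g' \<subseteq> S \<and> path_image h \<subseteq> S \<and>
              (\<forall>f. f holomorphic_on S \<longrightarrow> contour_integral h f = contour_integral g' f)"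
    using contour_integral_nearby_ends [OF S \<open>path g\<close> pg] by metis
  obtain p where p: "polynomial_function p" "pathstart p = pathstart g" "pathfinish p = pathfinish g"
    "\<And>t. t \<in> {0..1} \<Longrightarrow> norm(p t - g t) < d"
    using path_approx_polynomial_function[OF \<open>path g\<close> d] by metis
  have vp: "valid_path p" using p(1) by (rule valid_path_polynomial_function)
  have r: "path_image p \<subseteq> S \<and> (\<forall>f. f holomorphic_on S \<longrightarrow> contour_integral p f = contour_integral g f)"
    using dd[OF g vp] p d by auto
  obtain p' where p': "polynomial_function p'" "\<And>x. (p has_vector_derivative (p' x)) (at x)"
    using has_vector_derivative_polynomial_function[OF p(1)] by metis
  have "continuous_on {0..1} (\<lambda>t. vector_derivative p (at t))"
    using continuous_on_polymonial_function[OF p'(1)] p'(2) vector_derivative_at by (metis (no_types, lifting) continuous_on_cong)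
  then show ?thesis using that vp r by metis
qed



theorem lemma5p8:
  fixes I :: "'i set" and \<gamma> :: "'i \<Rightarrow> real \<Rightarrow> complex"
    and \<xi> :: "complex \<Rightarrow> complex" and f :: "complex \<Rightarrow> complex \<Rightarrow> complex"
    and U :: "complex set"
  assumes "jordan_curve I \<gamma>"
    and "\<xi> meromorphic_on closure (jdomain I \<gamma>)"
    and "\<xi> analytic_on jcurve_image I \<gamma>"
    and "open U" and "closure (jdomain I \<gamma>) \<subseteq> U"
    and "continuous_on (U \<times> U) (\<lambda>(u, v). f u v)"
    and "\<forall>v\<in>U. (\<lambda>u. f u v) holomorphic_on U"
    and "\<forall>u\<in>U. f u holomorphic_on U"
  shows "jint I \<gamma> (\<lambda>v. jint I \<gamma> (\<lambda>u. f u v * dquot \<xi> u v))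
           = - jint I \<gamma> (\<lambda>u. f u u * \<xi> u)"
proof -
  note J = assms(1)[unfolded jordan_curve_def]
  have finI: "finite I" using J by blast
  have vp: "\<And>i. i \<in> I \<Longrightarrow> valid_path (\<gamma> i)" and sp: "\<And>i. i \<in> I \<Longrightarrow> simple_path (\<gamma> i)"
    and cl: "\<And>i. i \<in> I \<Longrightarrow> pathfinish (\<gamma> i) = pathstart (\<gamma> i)"
    and wn1: "\<And>i z. i \<in> I \<Longrightarrow> z \<in> inside (path_image (\<gamma> i)) \<Longrightarrow> winding_number (\<gamma> i) z = 1"
    and disj: "\<And>i j. i \<in> I \<Longrightarrow> j \<in> I \<Longrightarrow> i \<noteq> j \<Longrightarrow> inside (path_image (\<gamma> i)) \<inter> inside (path_image (\<gamma> j)) = {}"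
    using J by blast+
  have pth: "\<And>i. i \<in> I \<Longrightarrow> path (\<gamma> i)" using vp valid_path_imp_path by blast
  define \<Gamma> where "\<Gamma> = jcurve_image I \<gamma>"
  define D where "D = jdomain I \<gamma>"
  define ins where "ins i = inside (path_image (\<gamma> i))" for i
  have JIO: "\<And>i. i \<in> I \<Longrightarrow> frontier (ins i) = path_image (\<gamma> i) \<and> connected (ins i) \<and> bounded (ins i)"
    unfolding ins_def using Jordan_inside_outside sp cl by blast
  have clins: "closure (ins i) = ins i \<union> path_image (\<gamma> i)" if "i \<in> I" for i
    using JIO[OF that] closure_Un_frontier by metis
  have insD: "ins i \<subseteq> D" if "i \<in> I" for i using that by (auto simp: D_def jdomain_def ins_def)
  have clinsD: "closure (ins i) \<subseteq> closure D" if "i \<in> I" for i using insD[OF that] closure_mono by blast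
  have pimD: "path_image (\<gamma> i) \<subseteq> closure D" if "i \<in> I" for i using clinsD[OF that] clins[OF that] by blast
  have \<Gamma>D: "\<Gamma> \<subseteq> closure D" using pimD by (auto simp: \<Gamma>_def jcurve_image_def)
  have clD: "closure D \<subseteq> (\<Union>i\<in>I. ins i \<union> path_image (\<gamma> i))"
  proof (rule closure_minimal)
    show "D \<subseteq> (\<Union>i\<in>I. ins i \<union> path_image (\<gamma> i))" by (auto simp: D_def jdomain_def ins_def)
    have "closed (\<Union>i\<in>I. closure (ins i))" using finI by (intro closed_UN) auto
    then show "closed (\<Union>i\<in>I. ins i \<union> path_image (\<gamma> i))" by (simp add: clins)
  qed
  have cpD: "compact (closure D)"
  proof -
    have "bounded D" unfolding D_def jdomain_def using finI JIO by (auto simp: ins_def)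
    then show ?thesis by (simp add: compact_closure)
  qed
  have cp\<Gamma>: "compact \<Gamma>" unfolding \<Gamma>_def jcurve_image_def
    using finI vp compact_valid_path_image by blast
  have out0: "winding_number (\<gamma> i) z = 0" if "i \<in> I" "z \<notin> ins i \<union> path_image (\<gamma> i)" for i z
    using that winding_number_zero_in_outside[OF pth cl] by (auto simp: outside_inside ins_def)
  have wsum: "(\<Sum>i\<in>I. winding_number (\<gamma> i) z) = 1" if zD: "z \<in> closure D" and z\<Gamma>: "z \<notin> \<Gamma>" for z
  proof -
    obtain j where j: "j \<in> I" "z \<in> ins j" using zD z\<Gamma> clD by (auto simp: \<Gamma>_def jcurve_image_def)
    have "(\<Sum>i\<in>I. winding_number (\<gamma> i) z) = winding_number (\<gamma> j) z + (\<Sum>i\<in>I-{j}. winding_number (\<gamma> i) z)"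
      using finI j by (simp add: sum.remove)
    also have "(\<Sum>i\<in>I-{j}. winding_number (\<gamma> i) z) = 0"
    proof (rule sum.neutral, rule ballI)
      fix i assume i: "i \<in> I - {j}"
      have "z \<notin> ins i" using disj[of i j] i j by (auto simp: ins_def)
      moreover have "z \<notin> path_image (\<gamma> i)" using z\<Gamma> i by (auto simp: \<Gamma>_def jcurve_image_def)
      ultimately show "winding_number (\<gamma> i) z = 0" using out0 i by blast
    qed
    finally show ?thesis using wn1 j by (simp add: ins_def)
  qed
  have "\<forall>z\<in>closure D. \<exists>r. r > 0 \<and> \<xi> analytic_on ball z r - {z}"
    using assms(2) unfolding D_def meromorphic_on_altdef isolated_singularity_at_def by blast
  then obtain R where R: "\<And>z. z \<in> closure D \<Longrightarrow> R z > 0 \<and> \<xi> analytic_on ball z (R z) - {z}"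
    by metis
  define W where "W = (\<Union>z\<in>closure D. ball z (R z))"
  have oW: "open W" unfolding W_def by auto
  have DW: "closure D \<subseteq> W"
  proof
    fix z assume "z \<in> closure D" then show "z \<in> W" unfolding W_def using R[of z] by (intro UN_I[of z]) auto
  qed
  define P where "P = {z \<in> closure D. \<not> \<xi> analytic_on {z}}"
  have P\<Gamma>: "P \<inter> \<Gamma> = {}"
    using assms(3) unfolding P_def \<Gamma>_def by (auto intro: analytic_on_subset)
  have PD: "P \<subseteq> closure D" by (auto simp: P_def)
  have anWP: "\<xi> analytic_on W - P"
    unfolding analytic_on_analytic_at[of _ "W - P"]
  proof
    fix w assume w: "w \<in> W - P"
    then obtain z where z: "z \<in> closure D" "w \<in> ball z (R z)" by (auto simp: W_def)
    show "\<xi> analytic_on {w}"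
    proof (cases "w = z")
      case True then show ?thesis using w z by (auto simp: P_def)
    next
      case False then show ?thesis using R[OF z(1)] z(2) analytic_on_subset by blast
    qed
  qed
  have finP: "finite P"
  proof -
    obtain C' where C': "C' \<subseteq> closure D" "finite C'" "closure D \<subseteq> (\<Union>c\<in>C'. ball c (R c))"
    proof (rule compactE_image[OF cpD, of "closure D" "\<lambda>c. ball c (R c)"])
      show "\<And>T. T \<in> closure D \<Longrightarrow> open (ball T (R T))" by simp
      show "closure D \<subseteq> (\<Union>c\<in>closure D. ball c (R c))" using DW by (simp add: W_def)
    qed
    have "P \<subseteq> C'"
    proof
      fix p assume p: "p \<in> P"
      then obtain c where c: "c \<in> C'" "p \<in> ball c (R c)" using C' PD by blast
      have "p = c"
      proof (rule ccontr)
        assume "p \<noteq> c"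
        then have "\<xi> analytic_on {p}" using R[of c] C' c analytic_on_subset by blast
        then show False using p by (auto simp: P_def)
      qed
      then show "p \<in> C'" using c by simp
    qed
    then show ?thesis using C' finite_subset by blast
  qed
  define U' where "U' = W \<inter> U"
  have oU': "open U'" using oW assms(4) by (auto simp: U'_def)
  have DU': "closure D \<subseteq> U'" using DW assms(5) by (auto simp: U'_def D_def)
  define Om where "Om = U' - P"
  have oO: "open Om" unfolding Om_def using oU' finP by (simp add: open_Diff finite_imp_closed)
  have \<xi>O: "\<xi> holomorphic_on Om"
    using anWP analytic_imp_holomorphic holomorphic_on_subset by (fastforce simp: Om_def U'_def)
  have \<Gamma>O: "\<Gamma> \<subseteq> Om" using \<Gamma>D DU' P\<Gamma> by (auto simp: Om_def)
  have HU: "(\<lambda>u. f u u) holomorphic_on U"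
    using diag_holo[OF assms(4) assms(6) assms(7) assms(8)] .
  have "\<forall>q\<in>P. \<exists>e>0. cball q e \<subseteq> U' - (\<Gamma> \<union> (P - {q}))"
  proof
    fix q assume q: "q \<in> P"
    have "open (U' - (\<Gamma> \<union> (P - {q})))"
      using oU' cp\<Gamma> finP by (intro open_Diff closed_Un compact_imp_closed finite_imp_closed) auto
    moreover have "q \<in> U' - (\<Gamma> \<union> (P - {q}))" using q PD DU' P\<Gamma> by auto
    ultimately show "\<exists>e>0. cball q e \<subseteq> U' - (\<Gamma> \<union> (P - {q}))"
      using open_contains_cball by blast
  qed
  then obtain E where E: "\<And>q. q \<in> P \<Longrightarrow> E q > 0 \<and> cball q (E q) \<subseteq> U' - (\<Gamma> \<union> (P - {q}))"
    by metis
  define rr where "rr q = E q / 2" for q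
  have rr0: "rr q > 0" if "q \<in> P" for q using E[OF that] by (simp add: rr_def)
  have rrU: "cball q (2 * rr q) \<subseteq> U'" if "q \<in> P" for q using E[OF that] by (auto simp: rr_def)
  have rr\<Gamma>: "cball q (2 * rr q) \<inter> \<Gamma> = {}" if "q \<in> P" for q using E[OF that] by (auto simp: rr_def)
  have rrP: "w = q" if "q \<in> P" "w \<in> cball q (2 * rr q)" "w \<in> P" for q w
    using E[OF that(1)] that by (auto simp: rr_def)
  define S where "S i = connected_component_set U' (pathstart (\<gamma> i))" for i
  have oS: "open (S i)" for i unfolding S_def using oU' by (rule open_connected_component)
  have cS: "connected (S i)" for i unfolding S_def by simp
  have SU: "S i \<subseteq> U'" for i unfolding S_def by (rule connected_component_subset)
  have TS: "ins i \<union> path_image (\<gamma> i) \<subseteq> S i" if i: "i \<in> I" for i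
  proof -
    have "closure (ins i) \<subseteq> S i" unfolding S_def
    proof (rule connected_component_maximal)
      show "pathstart (\<gamma> i) \<in> closure (ins i)" using clins[OF i] pathstart_in_path_image by blast
      show "connected (closure (ins i))" using JIO[OF i] connected_imp_connected_closure by blast
      show "closure (ins i) \<subseteq> U'" using clinsD[OF i] DU' by blast
    qed
    then show ?thesis using clins[OF i] by simp
  qed
  have CS: "contour_integral (\<gamma> i) k = (\<Sum>q\<in>P. winding_number (\<gamma> i) q * contour_integral (circlepath q (rr q)) k)"
    if i: "i \<in> I" and k: "k holomorphic_on Om" for i k
  proof -
    have "\<forall>p\<in>S i. \<exists>e>0. \<forall>w\<in>cball p e. w \<in> S i \<and> (w \<noteq> p \<longrightarrow> w \<notin> P)"
      using finite_cball_avoid[OF oS finP] by blast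
    then obtain h0 where h0: "\<And>p. p \<in> S i \<Longrightarrow> h0 p > 0 \<and> (\<forall>w\<in>cball p (h0 p). w \<in> S i \<and> (w \<noteq> p \<longrightarrow> w \<notin> P))"
      by metis
    define h where "h p = (if p \<in> P then rr p else h0 p)" for p
    have avoid: "\<forall>p\<in>S i. h p > 0 \<and> (\<forall>w\<in>cball p (h p). w \<in> S i \<and> (w \<noteq> p \<longrightarrow> w \<notin> P))"
    proof
      fix p assume p: "p \<in> S i"
      show "h p > 0 \<and> (\<forall>w\<in>cball p (h p). w \<in> S i \<and> (w \<noteq> p \<longrightarrow> w \<notin> P))"
      proof (cases "p \<in> P")
        case False then show ?thesis using h0[OF p] by (simp add: h_def)
      next
        case True
        have sub: "cball p (rr p) \<subseteq> cball p (2 * rr p)" using rr0[OF True] by auto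
        have "cball p (rr p) \<subseteq> connected_component_set U' p"
          using rr0[OF True] rrU[OF True] sub by (intro connected_component_maximal) auto
        also have "connected_component_set U' p = S i"
          using p unfolding S_def by (rule connected_component_eq)
        finally show ?thesis using True rr0[OF True] rrP[OF True] sub by (auto simp: h_def)
      qed
    qed
    have "contour_integral (\<gamma> i) k = (\<Sum>p\<in>P. winding_number (\<gamma> i) p * contour_integral (circlepath p (h p)) k)"
    proof (rule Cauchy_theorem_singularities[OF oS cS finP _ vp[OF i] cl[OF i] _ _ avoid])
      show "k holomorphic_on S i - P" by (rule holomorphic_on_subset[OF k]) (use SU in \<open>auto simp: Om_def\<close>)
      show "path_image (\<gamma> i) \<subseteq> S i - P" using TS[OF i] P\<Gamma> i by (auto simp: \<Gamma>_def jcurve_image_def)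
      show "\<forall>z. z \<notin> S i \<longrightarrow> winding_number (\<gamma> i) z = 0" using TS[OF i] out0[OF i] by blast
    qed
    also have "\<dots> = (\<Sum>q\<in>P. winding_number (\<gamma> i) q * contour_integral (circlepath q (rr q)) k)"
      by (rule sum.cong) (auto simp: h_def)
    finally show ?thesis .
  qed
  have CSsum: "(\<Sum>i\<in>I. contour_integral (\<gamma> i) k) = (\<Sum>q\<in>P. contour_integral (circlepath q (rr q)) k)"
    if k: "k holomorphic_on Om" for k
  proof -
    have "(\<Sum>i\<in>I. contour_integral (\<gamma> i) k)
        = (\<Sum>i\<in>I. \<Sum>q\<in>P. winding_number (\<gamma> i) q * contour_integral (circlepath q (rr q)) k)"
      using CS[OF _ k] by simp
    also have "\<dots> = (\<Sum>q\<in>P. \<Sum>i\<in>I. winding_number (\<gamma> i) q * contour_integral (circlepath q (rr q)) k)"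
      by (rule sum.swap)
    also have "\<dots> = (\<Sum>q\<in>P. (\<Sum>i\<in>I. winding_number (\<gamma> i) q) * contour_integral (circlepath q (rr q)) k)"
      by (simp add: sum_distrib_right)
    also have "\<dots> = (\<Sum>q\<in>P. contour_integral (circlepath q (rr q)) k)"
      using wsum PD P\<Gamma> by (intro sum.cong) auto
    finally show ?thesis .
  qed
  have U'U: "U' \<subseteq> U" by (simp add: U'_def)
  have \<Gamma>U: "\<Gamma> \<subseteq> U" using \<Gamma>D DU' U'U by blast
  have fv_cont: "continuous_on U (\<lambda>u. f u v)" if "v \<in> U" for v
    using assms(7) that holomorphic_on_imp_continuous_on by blast
  have fu_hol: "f u holomorphic_on U" if "u \<in> U" for u using assms(8) that by blast
  have fv_hol: "(\<lambda>u. f u v) holomorphic_on U" if "v \<in> U" for v using assms(7) that by blast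
  have sphO: "sphere q (rr q) \<subseteq> Om" if q: "q \<in> P" for q
  proof
    fix w assume w: "w \<in> sphere q (rr q)"
    then have wc: "w \<in> cball q (2 * rr q)" using rr0[OF q] by auto
    have "w \<noteq> q" using w rr0[OF q] by auto
    then show "w \<in> Om" using wc rrU[OF q] rrP[OF q wc] by (auto simp: Om_def)
  qed
  have pimC: "path_image (circlepath q (rr q)) = sphere q (rr q)" if q: "q \<in> P" for q
    using rr0[OF q] by (simp add: path_image_circlepath_nonneg)
  have \<xi>sph: "continuous_on (sphere q (rr q)) \<xi>" if q: "q \<in> P" for q
    using \<xi>O sphO[OF q] holomorphic_on_imp_continuous_on holomorphic_on_subset by blast
  have sphU: "sphere q (rr q) \<subseteq> U" if q: "q \<in> P" for q using sphO[OF q] U'U by (auto simp: Om_def)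
  define \<Phi> where "\<Phi> q v = contour_integral (circlepath q (rr q)) (\<lambda>u. f u v * \<xi> u / (u - v))" for q v
  define A where "A q = contour_integral (circlepath q (rr q)) (\<lambda>u. f u u * \<xi> u)" for q
  have claim2: "contour_integral (circlepath q (rr q)) (\<lambda>u. f u v * dquot \<xi> u v) = \<Phi> q v"
    if q: "q \<in> P" and v: "v \<in> \<Gamma>" for q v
  proof -
    have vU: "v \<in> U" using v \<Gamma>U by blast
    have vc: "v \<notin> cball q (2 * rr q)" using rr\<Gamma>[OF q] v by blast
    have neq: "u \<noteq> v" if "u \<in> sphere q (rr q)" for u using that vc rr0[OF q] by auto
    have eq: "f u v * dquot \<xi> u v = f u v * \<xi> u / (u - v) - \<xi> v * (f u v / (u - v))"
      if "u \<in> path_image (circlepath q (rr q))" for u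
    proof -
      have "u \<noteq> v" using neq[of u] that pimC[OF q] rr0[OF q] by auto
      then have "u - v \<noteq> 0" by simp
      then show ?thesis using \<open>u \<noteq> v\<close> by (simp add: dquot_def diff_divide_distrib algebra_simps)
    qed
    have c1: "continuous_on (sphere q (rr q)) (\<lambda>u. f u v)"
      using fv_cont[OF vU] sphU[OF q] continuous_on_subset by blast
    have i1: "(\<lambda>u. f u v * \<xi> u / (u - v)) contour_integrable_on circlepath q (rr q)"
      using c1 \<xi>sph[OF q] neq pimC[OF q]
      by (intro contour_integrable_continuous_circlepath) (auto intro!: continuous_intros)
    have i2: "(\<lambda>u. \<xi> v * (f u v / (u - v))) contour_integrable_on circlepath q (rr q)"
      using c1 neq pimC[OF q]
      by (intro contour_integrable_continuous_circlepath) (auto intro!: continuous_intros)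
    have z: "((\<lambda>u. f u v / (u - v)) has_contour_integral 0) (circlepath q (rr q))"
    proof (rule Cauchy_theorem_convex_simple[of _ "ball q (2 * rr q)"])
      have "ball q (2 * rr q) \<subseteq> U" using rrU[OF q] U'U ball_subset_cball by blast
      then show "(\<lambda>u. f u v / (u - v)) holomorphic_on ball q (2 * rr q)"
        using vc by (intro holomorphic_intros holomorphic_on_subset[OF fv_hol[OF vU]]) auto
      show "path_image (circlepath q (rr q)) \<subseteq> ball q (2 * rr q)" using pimC[OF q] rr0[OF q] by auto
    qed auto
    have "contour_integral (circlepath q (rr q)) (\<lambda>u. f u v * dquot \<xi> u v)
        = contour_integral (circlepath q (rr q)) (\<lambda>u. f u v * \<xi> u / (u - v) - \<xi> v * (f u v / (u - v)))"
      by (rule contour_integral_eq) (rule eq)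
    also have "\<dots> = \<Phi> q v - contour_integral (circlepath q (rr q)) (\<lambda>u. \<xi> v * (f u v / (u - v)))"
      unfolding \<Phi>_def by (rule contour_integral_diff[OF i1 i2])
    also have "contour_integral (circlepath q (rr q)) (\<lambda>u. \<xi> v * (f u v / (u - v))) = 0"
      using contour_integral_unique[OF has_contour_integral_lmul[OF z, of "\<xi> v"]] by simp
    finally show ?thesis by simp
  qed
  have Hsph: "continuous_on (sphere q (rr q)) (\<lambda>u. f u u * \<xi> u)" if q: "q \<in> P" for q
  proof -
    have "continuous_on (sphere q (rr q)) (\<lambda>u. f u u)"
      using HU sphU[OF q] holomorphic_on_imp_continuous_on holomorphic_on_subset by blast
    then show ?thesis using \<xi>sph[OF q] by (intro continuous_intros)
  qed
  define Sq where "Sq q = U - cball q (rr q)" for q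
  have oSq: "open (Sq q)" for q using assms(4) by (simp add: Sq_def open_Diff)
  have Fc: "continuous_on (path_image (circlepath q (rr q)) \<times> Sq q) (\<lambda>(u, v). f u v * \<xi> u / (u - v))"
    if q: "q \<in> P" for q
  proof -
    have a: "continuous_on (sphere q (rr q) \<times> Sq q) (\<lambda>x. f (fst x) (snd x))"
      using continuous_on_subset[OF assms(6)] sphU[OF q] by (simp add: split_beta Sigma_mono Sq_def)
    have b: "continuous_on (sphere q (rr q) \<times> Sq q) (\<lambda>x. \<xi> (fst x))"
      by (rule continuous_on_compose2[OF \<xi>sph[OF q] continuous_on_fst]) auto
    have "continuous_on (sphere q (rr q) \<times> Sq q) (\<lambda>x. f (fst x) (snd x) * \<xi> (fst x) / (fst x - snd x))"
      using a b by (intro continuous_intros) (auto simp: Sq_def)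
    then show ?thesis using pimC[OF q] by (simp add: split_beta)
  qed
  have Fh: "(\<lambda>v. f u v * \<xi> u / (u - v)) holomorphic_on Sq q"
    if q: "q \<in> P" and u: "u \<in> path_image (circlepath q (rr q))" for q u
  proof -
    have "u \<in> U" "u \<in> cball q (rr q)" using u pimC[OF q] sphU[OF q] by auto
    then show ?thesis
      by (intro holomorphic_intros holomorphic_on_subset[OF fu_hol]) (auto simp: Sq_def)
  qed
  have hol\<Phi>: "\<Phi> q holomorphic_on Sq q" if q: "q \<in> P" for q
    unfolding \<Phi>_def[abs_def]
    by (rule param_holo[OF valid_path_circlepath vd_circlepath_cont oSq Fc[OF q] Fh[OF q]])
  have \<gamma>S: "path_image (\<gamma> i) \<subseteq> Sq q" if q: "q \<in> P" and i: "i \<in> I" for q i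
  proof -
    have "path_image (\<gamma> i) \<subseteq> \<Gamma>" using i by (auto simp: \<Gamma>_def jcurve_image_def)
    moreover have "cball q (rr q) \<subseteq> cball q (2 * rr q)" using rr0[OF q] by auto
    ultimately show ?thesis using \<Gamma>U rr\<Gamma>[OF q] by (auto simp: Sq_def)
  qed
  have claim4: "contour_integral (\<gamma> i) (\<Phi> q) = - (2 * of_real pi * \<i>) * winding_number (\<gamma> i) q * A q"
    if q: "q \<in> P" and i: "i \<in> I" for q i
  proof -
    obtain p where vpp: "valid_path p" and dp: "continuous_on {0..1} (\<lambda>t. vector_derivative p (at t))"
      and pS: "path_image p \<subseteq> Sq q"
      and peq: "\<And>g. g holomorphic_on Sq q \<Longrightarrow> contour_integral (\<gamma> i) g = contour_integral p g"
      using approx_poly[OF oSq vp[OF i] \<gamma>S[OF q i]] by metis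
    have fcon: "continuous_on (path_image p \<times> path_image (circlepath q (rr q)))
        (\<lambda>(y1, y2). f y2 y1 * \<xi> y2 / (y2 - y1))"
    proof -
      have "continuous_on (Sq q \<times> path_image (circlepath q (rr q))) (\<lambda>(y1, y2). f y2 y1 * \<xi> y2 / (y2 - y1))"
        using continuous_on_swap_args[OF Fc[OF q]] by (simp add: split_beta)
      then show ?thesis by (rule continuous_on_subset) (use pS in \<open>simp add: Sigma_mono\<close>)
    qed
    have "contour_integral (\<gamma> i) (\<Phi> q) = contour_integral p (\<Phi> q)" by (rule peq[OF hol\<Phi>[OF q]])
    also have "\<dots> = contour_integral (circlepath q (rr q)) (\<lambda>u. contour_integral p (\<lambda>v. f u v * \<xi> u / (u - v)))"
      using contour_integral_swap[of p "circlepath q (rr q)" "\<lambda>v u. f u v * \<xi> u / (u - v)",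
          OF fcon vpp valid_path_circlepath dp vd_circlepath_cont]
      by (simp add: \<Phi>_def[abs_def])
    also have "\<dots> = contour_integral (circlepath q (rr q))
                      (\<lambda>u. - (2 * of_real pi * \<i>) * winding_number (\<gamma> i) q * (f u u * \<xi> u))"
    proof (rule contour_integral_eq)
      fix u assume u: "u \<in> path_image (circlepath q (rr q))"
      have uU: "u \<in> U" using u pimC[OF q] sphU[OF q] by auto
      have uc: "u \<in> cball q (rr q)" using u pimC[OF q] by auto
      have uG: "u \<notin> path_image (\<gamma> i)" using \<gamma>S[OF q i] uc by (auto simp: Sq_def)
      have "contour_integral p (\<lambda>v. f u v * \<xi> u / (u - v)) = contour_integral (\<gamma> i) (\<lambda>v. f u v * \<xi> u / (u - v))"
        by (rule peq[OF Fh[OF q u], symmetric])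
      also have "\<dots> = contour_integral (\<gamma> i) (\<lambda>v. - \<xi> u * (f u v / (v - u)))"
      proof (rule contour_integral_eq)
        fix v assume "v \<in> path_image (\<gamma> i)"
        then have "v \<noteq> u" using uG by auto
        then have "v - u \<noteq> 0" "u - v \<noteq> 0" by auto
        then show "f u v * \<xi> u / (u - v) = - \<xi> u * (f u v / (v - u))"
          by (simp add: field_simps)
      qed
      also have "\<dots> = - \<xi> u * (2 * pi * \<i> * winding_number (\<gamma> i) u * f u u)"
      proof -
        have "((\<lambda>v. f u v / (v - u)) has_contour_integral (2 * pi * \<i> * winding_number (\<gamma> i) u * f u u)) (\<gamma> i)"
        proof (rule Cauchy_integral_formula_global[OF assms(4) fu_hol[OF uU] uU vp[OF i] _ cl[OF i]])
          show "path_image (\<gamma> i) \<subseteq> U - {u}" using uG \<gamma>S[OF q i] by (auto simp: Sq_def)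
          fix w assume "w \<notin> U"
          then have "w \<notin> ins i \<union> path_image (\<gamma> i)" using TS[OF i] SU U'U by blast
          then show "winding_number (\<gamma> i) w = 0" by (rule out0[OF i])
        qed
        then show ?thesis using contour_integral_unique has_contour_integral_lmul by blast
      qed
      also have "winding_number (\<gamma> i) u = winding_number (\<gamma> i) q"
      proof (rule winding_number_eq[OF pth[OF i] cl[OF i] uc])
        show "q \<in> cball q (rr q)" using rr0[OF q] by simp
        show "cball q (rr q) \<inter> path_image (\<gamma> i) = {}" using \<gamma>S[OF q i] by (auto simp: Sq_def)
      qed simp
      finally show "contour_integral p (\<lambda>v. f u v * \<xi> u / (u - v))
          = - (2 * of_real pi * \<i>) * winding_number (\<gamma> i) q * (f u u * \<xi> u)"
        by (simp add: algebra_simps)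
    qed
    also have "\<dots> = - (2 * of_real pi * \<i>) * winding_number (\<gamma> i) q * A q"
      unfolding A_def
      by (rule contour_integral_lmul, rule contour_integrable_continuous_circlepath)
         (use Hsph[OF q] pimC[OF q] in simp)
    finally show ?thesis .
  qed
  define \<tau> where "\<tau> = 2 * of_real pi * \<i>"
  have \<tau>0: "\<tau> \<noteq> 0" by (simp add: \<tau>_def)
  have OmU: "Om \<subseteq> U" using U'U by (auto simp: Om_def)
  have inner: "jint I \<gamma> (\<lambda>u. f u v * dquot \<xi> u v) = (1 / \<tau>) * (\<Sum>q\<in>P. \<Phi> q v)" if v: "v \<in> \<Gamma>" for v
  proof -
    have vO: "v \<in> Om" "v \<in> U" using v \<Gamma>O OmU by auto
    have e: "(\<lambda>u. dquot \<xi> u v) = (\<lambda>z. if z = v then deriv \<xi> v else (\<xi> z - \<xi> v) / (z - v))"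
      by (auto simp: dquot_def fun_eq_iff)
    have "(\<lambda>u. dquot \<xi> u v) holomorphic_on Om" unfolding e by (rule pole_lemma_open[OF \<xi>O oO])
    moreover have "(\<lambda>u. f u v) holomorphic_on Om" using fv_hol[OF vO(2)] OmU holomorphic_on_subset by blast
    ultimately have k: "(\<lambda>u. f u v * dquot \<xi> u v) holomorphic_on Om" by (intro holomorphic_intros)
    show ?thesis
      unfolding jint_def CSsum[OF k] \<tau>_def using claim2 v by simp
  qed
  have lhs_i: "contour_integral (\<gamma> i) (\<lambda>v. jint I \<gamma> (\<lambda>u. f u v * dquot \<xi> u v))
      = - (\<Sum>q\<in>P. winding_number (\<gamma> i) q * A q)" if i: "i \<in> I" for i
  proof -
    have int: "\<Phi> q contour_integrable_on \<gamma> i" if q: "q \<in> P" for q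
      using contour_integrable_holomorphic_simple[OF hol\<Phi>[OF q] oSq vp[OF i] \<gamma>S[OF q i]] .
    have "contour_integral (\<gamma> i) (\<lambda>v. jint I \<gamma> (\<lambda>u. f u v * dquot \<xi> u v))
        = contour_integral (\<gamma> i) (\<lambda>v. (1 / \<tau>) * (\<Sum>q\<in>P. \<Phi> q v))"
      using i by (intro contour_integral_eq inner) (auto simp: \<Gamma>_def jcurve_image_def)
    also have "\<dots> = (1 / \<tau>) * (\<Sum>q\<in>P. contour_integral (\<gamma> i) (\<Phi> q))"
    proof -
      have s: "(\<lambda>v. \<Sum>q\<in>P. \<Phi> q v) contour_integrable_on \<gamma> i"
        using int finP by (intro contour_integrable_sum) auto
      have "contour_integral (\<gamma> i) (\<lambda>v. (1 / \<tau>) * (\<Sum>q\<in>P. \<Phi> q v))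
          = (1 / \<tau>) * contour_integral (\<gamma> i) (\<lambda>v. \<Sum>q\<in>P. \<Phi> q v)"
        by (rule contour_integral_lmul[OF s])
      also have "contour_integral (\<gamma> i) (\<lambda>v. \<Sum>q\<in>P. \<Phi> q v) = (\<Sum>q\<in>P. contour_integral (\<gamma> i) (\<Phi> q))"
        using int finP by (intro contour_integral_sum) auto
      finally show ?thesis .
    qed
    also have "\<dots> = (1 / \<tau>) * (\<Sum>q\<in>P. - \<tau> * winding_number (\<gamma> i) q * A q)"
      by (rule arg_cong[where f="\<lambda>x. (1 / \<tau>) * x"], rule sum.cong[OF refl]) (simp add: claim4 i \<tau>_def)
    also have "(\<Sum>q\<in>P. - \<tau> * winding_number (\<gamma> i) q * A q) = - \<tau> * (\<Sum>q\<in>P. winding_number (\<gamma> i) q * A q)"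
      by (simp add: sum_distrib_left mult.assoc)
    also have "(1 / \<tau>) * (- \<tau> * (\<Sum>q\<in>P. winding_number (\<gamma> i) q * A q)) = - (\<Sum>q\<in>P. winding_number (\<gamma> i) q * A q)"
      using \<tau>0 by (simp add: field_simps)
    finally show ?thesis .
  qed
  have "jint I \<gamma> (\<lambda>v. jint I \<gamma> (\<lambda>u. f u v * dquot \<xi> u v))
      = (1 / \<tau>) * (\<Sum>i\<in>I. - (\<Sum>q\<in>P. winding_number (\<gamma> i) q * A q))"
    unfolding jint_def[of I \<gamma> "\<lambda>v. jint I \<gamma> (\<lambda>u. f u v * dquot \<xi> u v)"] \<tau>_def[symmetric]
    by (rule arg_cong[where f="\<lambda>x. (1 / \<tau>) * x"], rule sum.cong[OF refl], rule lhs_i)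
  also have "(\<Sum>i\<in>I. - (\<Sum>q\<in>P. winding_number (\<gamma> i) q * A q))
      = - (\<Sum>q\<in>P. (\<Sum>i\<in>I. winding_number (\<gamma> i) q) * A q)"
  proof -
    have "(\<Sum>i\<in>I. \<Sum>q\<in>P. winding_number (\<gamma> i) q * A q) = (\<Sum>q\<in>P. \<Sum>i\<in>I. winding_number (\<gamma> i) q * A q)"
      by (rule sum.swap)
    also have "\<dots> = (\<Sum>q\<in>P. (\<Sum>i\<in>I. winding_number (\<gamma> i) q) * A q)"
      by (simp add: sum_distrib_right)
    finally show ?thesis by (simp add: sum_negf)
  qed
  also have "(\<Sum>q\<in>P. (\<Sum>i\<in>I. winding_number (\<gamma> i) q) * A q) = (\<Sum>q\<in>P. A q)"
  proof (rule sum.cong[OF refl])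
    fix q assume q: "q \<in> P"
    then have "q \<in> closure D" "q \<notin> \<Gamma>" using PD P\<Gamma> by auto
    then show "(\<Sum>i\<in>I. winding_number (\<gamma> i) q) * A q = A q" by (simp add: wsum)
  qed
  also have "(1 / \<tau>) * - (\<Sum>q\<in>P. A q) = - (1 / \<tau>) * (\<Sum>q\<in>P. A q)" by simp
  also have "\<dots> = - jint I \<gamma> (\<lambda>u. f u u * \<xi> u)"
  proof -
    have "(\<lambda>u. f u u * \<xi> u) holomorphic_on Om"
      using holomorphic_on_subset[OF HU OmU] \<xi>O by (intro holomorphic_intros)
    from CSsum[OF this] show ?thesis unfolding jint_def \<tau>_def A_def by simp
  qed
  finally show ?thesis .
qed

end
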